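(* Let $G=(V,E)$ be a graph with maximum (undirected) degree $\Delta$ and arboricity $\alpha$, let $\mu$ be an orientation of its edges with out-degree at most $2\alpha$, and let $h\le\log\alpha$. Procedure Oriented Edge-Coloring$(G,\mu,h)$ computes a proper $(\Delta+3\cdot2^h)$-edge-coloring of $G$.
   Context: Logarithms are base 2. The arboricity of $G$ is $\max_{S\subseteq V,|S|\ge2}\lceil |E(G[S])|/(|S|-1)\rceil$. A proper $k$-edge-coloring is a map $\varphi:E\to\{1,\dots,k\}$ with distinct colors on distinct edges sharing an endpoint. An oriented degree-splitting of $(H,\mu)$ with discrepancy $\kappa$ is a partition $(E_1,E_2)$ of $E(H)$ such that for every vertex $v$, the numbers of incoming edges of $v$ in $E_1$ and in $E_2$ differ by at most $\kappa$, and likewise for outgoing edges. Procedure Oriented Edge-Coloring$(H,\mu,h)$: if $h=0$, return a proper $(\Delta(H)+1)$-edge-coloring of (the undirected) $H$ with palette $\{1,\dots,\Delta(H)+1\}$, computed by a base-case subroutine; otherwise compute an oriented degree-splitting $(E_1,E_2)$ of $(H,\mu)$ with discrepancy at most 1, let $H_1=(V,E_1)$, $H_2=(V,E_2)$ with orientation induced by $\mu$, compute $\varphi_1=$ Oriented Edge-Coloring$(H_1,\mu,h-1)$, $\varphi_2=$ Oriented Edge-Coloring$(H_2,\mu,h-1)$, and return $\varphi=\varphi_1$ on $E_1$ and $\varphi=p_1+\varphi_2$ on $E_2$, where $p_1$ is the palette size of $\varphi_1$. *)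

theory Defs
  imports Complex_Main
begin

text \<open>Undirected simple graph on vertex set V with edge set E of 2-element subsets of V.
An orientation mu maps each edge e to an ordered pair (tail, head) with e = {tail, head}.\<close>

definition simple_graph :: "'a set \<Rightarrow> 'a set set \<Rightarrow> bool" where
  "simple_graph V E \<longleftrightarrow> finite V \<and>
     (\<forall>e\<in>E. \<exists>u v. e = {u, v} \<and> u \<noteq> v \<and> u \<in> V \<and> v \<in> V)"

definition is_orientation :: "'a set set \<Rightarrow> ('a set \<Rightarrow> 'a \<times> 'a) \<Rightarrow> bool" where
  "is_orientation E mu \<longleftrightarrow> (\<forall>e\<in>E. e = {fst (mu e), snd (mu e)})"

definition degree :: "'a set set \<Rightarrow> 'a \<Rightarrow> nat" where
  "degree E v = card {e\<in>E. v \<in> e}"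

definition max_degree :: "'a set \<Rightarrow> 'a set set \<Rightarrow> nat" where
  "max_degree V E = Max (insert 0 (degree E ` V))"

definition out_degree :: "('a set \<Rightarrow> 'a \<times> 'a) \<Rightarrow> 'a set set \<Rightarrow> 'a \<Rightarrow> nat" where
  "out_degree mu E v = card {e\<in>E. fst (mu e) = v}"

definition in_degree :: "('a set \<Rightarrow> 'a \<times> 'a) \<Rightarrow> 'a set set \<Rightarrow> 'a \<Rightarrow> nat" where
  "in_degree mu E v = card {e\<in>E. snd (mu e) = v}"

definition arboricity :: "'a set \<Rightarrow> 'a set set \<Rightarrow> nat" where
  "arboricity V E = Max (insert 0
     {nat \<lceil>real (card {e\<in>E. e \<subseteq> S}) / (real (card S) - 1)\<rceil> | S. S \<subseteq> V \<and> card S \<ge> 2})"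

definition proper_edge_coloring :: "'a set set \<Rightarrow> ('a set \<Rightarrow> nat) \<Rightarrow> nat \<Rightarrow> bool" where
  "proper_edge_coloring E phi k \<longleftrightarrow>
     (\<forall>e\<in>E. phi e \<in> {1..k}) \<and>
     (\<forall>e\<in>E. \<forall>e'\<in>E. e \<noteq> e' \<and> e \<inter> e' \<noteq> {} \<longrightarrow> phi e \<noteq> phi e')"

definition oriented_degree_splitting ::
  "'a set \<Rightarrow> 'a set set \<Rightarrow> ('a set \<Rightarrow> 'a \<times> 'a) \<Rightarrow> nat \<Rightarrow> 'a set set \<Rightarrow> 'a set set \<Rightarrow> bool" where
  "oriented_degree_splitting V E mu kappa E1 E2 \<longleftrightarrow>
     E1 \<union> E2 = E \<and> E1 \<inter> E2 = {} \<and>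
     (\<forall>v\<in>V. \<bar>int (in_degree mu E1 v) - int (in_degree mu E2 v)\<bar> \<le> int kappa \<and>
             \<bar>int (out_degree mu E1 v) - int (out_degree mu E2 v)\<bar> \<le> int kappa)"

text \<open>All possible runs of Oriented Edge-Coloring(H, mu, h): oec V mu E h phi p means that
the procedure, for some admissible choices of the splittings and base-case colorings,
returns the coloring phi whose palette size is p.\<close>
inductive oec :: "'a set \<Rightarrow> ('a set \<Rightarrow> 'a \<times> 'a) \<Rightarrow> 'a set set \<Rightarrow> nat \<Rightarrow> ('a set \<Rightarrow> nat) \<Rightarrow> nat \<Rightarrow> bool"
  for V mu where
  base: "proper_edge_coloring E phi (max_degree V E + 1) \<Longrightarrow>
         oec V mu E 0 phi (max_degree V E + 1)"
| step: "oriented_degree_splitting V E mu 1 E1 E2 \<Longrightarrow>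
         oec V mu E1 h phi1 p1 \<Longrightarrow> oec V mu E2 h phi2 p2 \<Longrightarrow>
         oec V mu E (Suc h) (\<lambda>e. if e \<in> E1 then phi1 e else p1 + phi2 e) (p1 + p2)"

end

theory Submission
  imports Defs
begin

lemma oec_proper:
  assumes "oec V mu E h phi p"
  shows "proper_edge_coloring E phi p"
  using assms
proof (induction rule: oec.induct)
  case (base E phi)
  then show ?case by simp
next
  case (step E E1 E2 h phi1 p1 phi2 p2)
  have U: "E1 \<union> E2 = E" and D: "E1 \<inter> E2 = {}"
    using step.hyps(1) unfolding oriented_degree_splitting_def by auto
  have r1: "\<forall>e\<in>E1. phi1 e \<in> {1..p1}" and q1: "\<forall>e\<in>E1. \<forall>e'\<in>E1. e \<noteq> e' \<and> e \<inter> e' \<noteq> {} \<longrightarrow> phi1 e \<noteq> phi1 e'"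
    using step.IH(1) unfolding proper_edge_coloring_def by auto
  have r2: "\<forall>e\<in>E2. phi2 e \<in> {1..p2}" and q2: "\<forall>e\<in>E2. \<forall>e'\<in>E2. e \<noteq> e' \<and> e \<inter> e' \<noteq> {} \<longrightarrow> phi2 e \<noteq> phi2 e'"
    using step.IH(2) unfolding proper_edge_coloring_def by auto
  let ?f = "\<lambda>e. if e \<in> E1 then phi1 e else p1 + phi2 e"
  have c1: "?f e \<le> p1" if "e \<in> E1" for e using that r1 by auto
  have c2: "?f e > p1" if "e \<in> E" "e \<notin> E1" for e using that r2 U by auto
  show ?case unfolding proper_edge_coloring_def
  proof (intro conjI ballI impI)
    fix e assume "e \<in> E"
    then show "?f e \<in> {1..p1 + p2}" using r1 r2 U by auto
  next
    fix e e' assume e: "e \<in> E" "e' \<in> E" "e \<noteq> e' \<and> e \<inter> e' \<noteq> {}"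
    show "?f e \<noteq> ?f e'"
    proof (cases "e \<in> E1"; cases "e' \<in> E1")
      assume "e \<in> E1" "e' \<in> E1" then show ?thesis using q1 e by simp
    next
      assume "e \<in> E1" "e' \<notin> E1" then show ?thesis using c1 c2 e by (metis not_less)
    next
      assume "e \<notin> E1" "e' \<in> E1" then show ?thesis using c1 c2 e by (metis not_less)
    next
      assume "e \<notin> E1" "e' \<notin> E1" then have "e \<in> E2" "e' \<in> E2" using U e by auto
      then show ?thesis using q2 e \<open>e \<notin> E1\<close> \<open>e' \<notin> E1\<close> by simp
    qed
  qed
qed

lemma proper_mono:
  "proper_edge_coloring E phi k \<Longrightarrow> k \<le> k' \<Longrightarrow> proper_edge_coloring E phi k'"
  unfolding proper_edge_coloring_def by fastforce

definition wf where "wf V E mu \<longleftrightarrow> simple_graph V E \<and> is_orientation E mu"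

lemma wf_sub: "wf V E mu \<Longrightarrow> E' \<subseteq> E \<Longrightarrow> wf V E' mu"
  unfolding wf_def simple_graph_def is_orientation_def by blast

lemma wf_finite: "wf V E mu \<Longrightarrow> finite E"
proof -
  assume "wf V E mu"
  then have "finite V" "E \<subseteq> Pow V" unfolding wf_def simple_graph_def by auto
  then show "finite E" by (meson finite_Pow_iff finite_subset)
qed

lemma degree_split:
  assumes "wf V E mu"
  shows "degree E v = in_degree mu E v + out_degree mu E v"
proof -
  have fin: "finite E" using wf_finite[OF assms] .
  have eq: "{e\<in>E. v \<in> e} = {e\<in>E. snd (mu e) = v} \<union> {e\<in>E. fst (mu e) = v}"
    using assms unfolding wf_def is_orientation_def by (auto; metis insertE singletonD)
  have dis: "{e\<in>E. snd (mu e) = v} \<inter> {e\<in>E. fst (mu e) = v} = {}"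
  proof (rule ccontr)
    assume "\<not> ?thesis"
    then obtain e where e: "e \<in> E" "snd (mu e) = v" "fst (mu e) = v" by auto
    have "e = {fst (mu e), snd (mu e)}" using assms e(1) unfolding wf_def is_orientation_def by auto
    moreover obtain a b where "e = {a, b}" "a \<noteq> b"
      using assms e(1) unfolding wf_def simple_graph_def by blast
    ultimately show False using e by (metis doubleton_eq_iff insert_absorb2)
  qed
  show ?thesis unfolding degree_def in_degree_def out_degree_def
    by (subst eq, rule card_Un_disjoint) (use fin dis in auto)
qed

lemma in_add:
  assumes "finite E" "E1 \<union> E2 = E" "E1 \<inter> E2 = {}"
  shows "in_degree mu E v = in_degree mu E1 v + in_degree mu E2 v"
    and "out_degree mu E v = out_degree mu E1 v + out_degree mu E2 v"
proof -
  have f1: "finite E1" "finite E2" using assms by auto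
  have "{e\<in>E. snd (mu e) = v} = {e\<in>E1. snd (mu e) = v} \<union> {e\<in>E2. snd (mu e) = v}"
    using assms by auto
  then show "in_degree mu E v = in_degree mu E1 v + in_degree mu E2 v"
    unfolding in_degree_def using f1 assms(3) by (simp add: card_Un_disjoint disjoint_iff)
  have "{e\<in>E. fst (mu e) = v} = {e\<in>E1. fst (mu e) = v} \<union> {e\<in>E2. fst (mu e) = v}"
    using assms by auto
  then show "out_degree mu E v = out_degree mu E1 v + out_degree mu E2 v"
    unfolding out_degree_def using f1 assms(3) by (simp add: card_Un_disjoint disjoint_iff)
qed

lemma max_degree_le:
  assumes "wf V E mu" "\<forall>v\<in>V. real (degree E v) \<le> K" "K \<ge> 0"
  shows "real (max_degree V E) \<le> K"
proof -
  have "finite V" using assms(1) unfolding wf_def simple_graph_def by auto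
  then have "max_degree V E \<in> insert 0 (degree E ` V)"
    unfolding max_degree_def by (intro Max_in) auto
  then show ?thesis using assms by auto
qed

lemma oec_palette:
  assumes "oec V mu E h phi p"
  shows "wf V E mu \<Longrightarrow> (\<forall>v\<in>V. real (in_degree mu E v) \<le> a v \<and> real (out_degree mu E v) \<le> b v)
    \<Longrightarrow> (\<forall>v\<in>V. a v + b v \<le> K) \<Longrightarrow> K \<ge> 0 \<Longrightarrow> real p \<le> K + 3 * 2 ^ h - 2"
  using assms
proof (induction arbitrary: a b K rule: oec.induct)
  case (base E phi)
  have "\<forall>v\<in>V. real (degree E v) \<le> K"
    using base.prems degree_split[OF base.prems(1)] by fastforce
  then have "real (max_degree V E) \<le> K" using max_degree_le base.prems by blast
  then show ?case by simp
next
  case (step E E1 E2 h phi1 p1 phi2 p2)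
  have U: "E1 \<union> E2 = E" and D: "E1 \<inter> E2 = {}"
    and S: "\<forall>v\<in>V. \<bar>int (in_degree mu E1 v) - int (in_degree mu E2 v)\<bar> \<le> 1 \<and>
             \<bar>int (out_degree mu E1 v) - int (out_degree mu E2 v)\<bar> \<le> 1"
    using step.hyps(1) unfolding oriented_degree_splitting_def by auto
  have fin: "finite E" using wf_finite step.prems(1) by blast
  note add = in_add[OF fin U D]
  define a' where "a' = (\<lambda>v. (a v + 1) / 2)"
  define b' where "b' = (\<lambda>v. (b v + 1) / 2)"
  have w1: "wf V E1 mu" "wf V E2 mu" using wf_sub step.prems(1) U by blast+
  have bnd: "\<forall>v\<in>V. real (in_degree mu Ei v) \<le> a' v \<and> real (out_degree mu Ei v) \<le> b' v"
    if "Ei = E1 \<or> Ei = E2" for Ei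
  proof
    fix v assume v: "v \<in> V"
    have s: "\<bar>int (in_degree mu E1 v) - int (in_degree mu E2 v)\<bar> \<le> 1"
      "\<bar>int (out_degree mu E1 v) - int (out_degree mu E2 v)\<bar> \<le> 1" using S v by auto
    have i: "real (in_degree mu E1 v) + real (in_degree mu E2 v) \<le> a v"
      "real (out_degree mu E1 v) + real (out_degree mu E2 v) \<le> b v"
      using step.prems(2) v add[where v=v] by (metis of_nat_add)+
    have s': "\<bar>real (in_degree mu E1 v) - real (in_degree mu E2 v)\<bar> \<le> 1"
      "\<bar>real (out_degree mu E1 v) - real (out_degree mu E2 v)\<bar> \<le> 1"
      using s by (metis of_int_abs of_int_diff of_int_of_nat_eq of_int_le_1_iff)+
    show "real (in_degree mu Ei v) \<le> a' v \<and> real (out_degree mu Ei v) \<le> b' v"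
      using that i s' unfolding a'_def b'_def by auto
  qed
  have K': "\<forall>v\<in>V. a' v + b' v \<le> (K + 2) / 2"
  proof
    fix v assume "v \<in> V"
    then have "a v + b v \<le> K" using step.prems(3) by auto
    then show "a' v + b' v \<le> (K + 2) / 2" unfolding a'_def b'_def by (simp add: add_divide_distrib[symmetric] divide_right_mono)
  qed
  have "real p1 \<le> (K + 2) / 2 + 3 * 2 ^ h - 2"
    using step.IH(1)[OF w1(1) bnd K'] step.prems(4) by auto
  moreover have "real p2 \<le> (K + 2) / 2 + 3 * 2 ^ h - 2"
    using step.IH(2)[OF w1(2) bnd K'] step.prems(4) by auto
  ultimately have "real p1 + real p2 \<le> K + 6 * 2 ^ h - 2" by (simp add: field_simps)
  then show ?case by simp
qed

theorem lemma4p11: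
  fixes V :: "'a set" and E :: "'a set set" and mu :: "'a set \<Rightarrow> 'a \<times> 'a"
    and h :: nat and phi :: "'a set \<Rightarrow> nat" and p :: nat
  assumes "simple_graph V E"
    and "is_orientation E mu"
    and "\<forall>v\<in>V. out_degree mu E v \<le> 2 * arboricity V E"
    and "real h \<le> log 2 (real (arboricity V E))"
    and "oec V mu E h phi p"
  shows "proper_edge_coloring E phi (max_degree V E + 3 * 2 ^ h)"
proof -
  have w: "wf V E mu" using assms(1,2) unfolding wf_def by auto
  have le: "\<forall>v\<in>V. real (in_degree mu E v) + real (out_degree mu E v) \<le> real (max_degree V E)"
  proof
    fix v assume v: "v \<in> V"
    have "finite V" using assms(1) unfolding simple_graph_def by auto
    then have "degree E v \<le> max_degree V E" unfolding max_degree_def using v by auto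
    then show "real (in_degree mu E v) + real (out_degree mu E v) \<le> real (max_degree V E)"
      using degree_split[OF w, of v] by simp
  qed
  have "real p \<le> real (max_degree V E) + 3 * 2 ^ h - 2"
    by (rule oec_palette[OF assms(5) w, of "\<lambda>v. real (in_degree mu E v)" "\<lambda>v. real (out_degree mu E v)"])
       (use le in auto)
  then have "real p \<le> real (max_degree V E + 3 * 2 ^ h)" by simp
  then have "p \<le> max_degree V E + 3 * 2 ^ h" using of_nat_le_iff by blast
  then show ?thesis using proper_mono oec_proper[OF assms(5)] by blast
qed

end
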